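(* Let $n\ge2$, $\alpha\in\mathbb{Z}_2^{n-1}$ and write $\alpha0=(\alpha_0,\dots,\alpha_{n-2},0)\in\mathbb{Z}_2^n$. Then $$\max_{\beta,\gamma\in\mathbb{Z}_2^n}\mathrm{adp}^{\mathrm{XR}}_{n-1}(\alpha0,\beta\to\gamma)=\mathrm{adp}^{\oplus}(\alpha0,\alpha0\to0)=\max_{\beta,\gamma\in\mathbb{Z}_2^n}\mathrm{adp}^{\oplus}(\alpha0,\beta\to\gamma).$$
   Context: For $x\in\mathbb{Z}_2^n$, $x=(x_0,\dots,x_{n-1})$ is identified with the integer $\sum_i x_i2^{n-1-i}$ ($x_0$ most significant); $+$ is addition modulo $2^n$, $\oplus$ is bitwise XOR, $x\lll r=(x_r,\dots,x_{n-1},x_0,\dots,x_{r-1})$. For $f:(\mathbb{Z}_2^n)^2\to\mathbb{Z}_2^n$, $\mathrm{adp}^f(\alpha,\beta\to\gamma)=4^{-n}\#\{(x,y): f(x+\alpha,y+\beta)=f(x,y)+\gamma\}$. $\mathrm{adp}^{\oplus}$ is this for $f(x,y)=x\oplus y$, and $\mathrm{adp}^{\mathrm{XR}}_r$ for $f(x,y)=(x\oplus y)\lll r$. *)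

theory Defs
  imports Main Complex_Main
begin

text \<open>Elements of Z_2^n are represented by natural numbers below 2^n
  (bit x_0 is the most significant bit).  Addition is modulo 2^n.\<close>

definition addn :: "nat \<Rightarrow> nat \<Rightarrow> nat \<Rightarrow> nat" where
  "addn n x y = (x + y) mod 2 ^ n"

definition rotl :: "nat \<Rightarrow> nat \<Rightarrow> nat \<Rightarrow> nat" where
  "rotl n r x = (x * 2 ^ r) mod 2 ^ n + x div 2 ^ (n - r)"

definition xorf :: "nat \<Rightarrow> nat \<Rightarrow> nat \<Rightarrow> nat" where
  "xorf n x y = Bit_Operations.xor x y"

definition xrf :: "nat \<Rightarrow> nat \<Rightarrow> nat \<Rightarrow> nat \<Rightarrow> nat" where
  "xrf n r x y = rotl n r (Bit_Operations.xor x y)"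

definition adp :: "nat \<Rightarrow> (nat \<Rightarrow> nat \<Rightarrow> nat) \<Rightarrow> nat \<Rightarrow> nat \<Rightarrow> nat \<Rightarrow> real" where
  "adp n f \<alpha> \<beta> \<gamma> =
     real (card {(x, y). x < 2 ^ n \<and> y < 2 ^ n \<and>
                   f (addn n x \<alpha>) (addn n y \<beta>) = addn n (f x y) \<gamma>}) / 4 ^ n"

end

theory Submission
  imports Defs
begin


lemma xor_div2: "xor (u::nat) v div 2 = xor (u div 2) (v div 2)"
  using drop_bit_xor[of 1 u v] by (simp add: drop_bit_eq_div)

lemma xor_mod2: "xor (u::nat) v mod 2 = (u + v) mod 2"
  by (metis even_add even_xor_iff mod2_eq_if)

lemma xor_modp: "xor ((u::nat) mod 2^n) (v mod 2^n) = xor u v mod 2^n"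
  using take_bit_xor[of n u v] by (simp add: take_bit_eq_mod)

lemma mod_Suc_iff: "((u::nat) mod 2^Suc n = v mod 2^Suc n) \<longleftrightarrow>
   (u mod 2 = v mod 2 \<and> (u div 2) mod 2^n = (v div 2) mod 2^n)"
proof -
  have a: "u mod 2^Suc n = 2 * (u div 2 mod 2^n) + u mod 2" "v mod 2^Suc n = 2 * (v div 2 mod 2^n) + v mod 2"
    using mod_mult2_eq[of _ 2 "2^n"] by auto
  have b: "r<2 \<Longrightarrow> s<2 \<Longrightarrow> (2*p+r = 2*q+(s::nat)) \<longleftrightarrow> (r=s \<and> p=q)" for p q r s
    by arith
  show ?thesis unfolding a by (subst b) auto
qed

lemma sum_double: "(\<Sum>x<2*m. f x) = (\<Sum>x<m. \<Sum>x0<2. f (2*x+x0::nat))"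
  by (induction m) (auto simp: numeral_2_eq_2 add.assoc)

definition cnd :: "nat \<Rightarrow> nat \<Rightarrow> nat \<Rightarrow> nat \<Rightarrow> nat \<Rightarrow> nat \<Rightarrow> nat \<Rightarrow> nat \<Rightarrow> nat \<Rightarrow> bool" where
  "cnd n al be ga c d e x y \<longleftrightarrow> xor (x+al+c) (y+be+d) mod 2^n = (xor x y + ga + e) mod 2^n"

definition G :: "nat \<Rightarrow> nat \<Rightarrow> nat \<Rightarrow> nat \<Rightarrow> nat \<Rightarrow> nat \<Rightarrow> nat \<Rightarrow> nat" where
  "G n al be ga c d e = (\<Sum>x<2^n. \<Sum>y<2^n. if cnd n al be ga c d e x y then 1 else 0)"


lemma div2l: "(2*k + r) div 2 = k + r div (2::nat)" by simp

lemma d1: "(2*x'+x0+al+c) div 2 = x' + al div 2 + (x0 + al mod 2 + c) div (2::nat)"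
proof -
  have h: "2*x'+x0+al+c = 2*(x' + al div 2) + (x0 + al mod 2 + c)"
    using div_mult_mod_eq[of al 2] unfolding distrib_left by linarith
  show ?thesis unfolding h by (rule div2l)
qed

lemma xx: "x0<2 \<Longrightarrow> y0 < 2 \<Longrightarrow> xor (2*x'+x0) (2*y'+y0) div 2 = xor x' (y'::nat)"
  by (simp add: xor_div2)
lemma modeq: "((a::nat) mod 2 = b mod 2) \<longleftrightarrow> (even a \<longleftrightarrow> even b)"
  by (metis mod2_eq_if one_neq_zero)
lemma xm: "x0<2 \<Longrightarrow> y0 < 2 \<Longrightarrow> xor (2*x'+x0) (2*y'+y0) mod 2 = (x0+y0) mod (2::nat)"
  unfolding xor_mod2 modeq by simp
lemma d2: "(u + ga + e) div 2 = u div 2 + ga div 2 + (u mod 2 + ga mod 2 + e) div (2::nat)"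
proof -
  have h: "u+ga+e = 2*(u div 2 + ga div 2) + (u mod 2 + ga mod 2 + e)"
    using div_mult_mod_eq[of u 2] div_mult_mod_eq[of ga 2] unfolding distrib_left by linarith
  show ?thesis unfolding h by (rule div2l)
qed

lemma par_lemma: "((2*x'+x0+al+c + (2*y'+y0+be+d)) mod 2 = ((x0+y0) mod 2 + ga + e) mod 2) \<longleftrightarrow>
   even (al+be+ga+c+d+(e::nat))"
  unfolding modeq by simp argo

lemma cnd_step:
  assumes "x0 < 2" "y0 < 2"
  shows "cnd (Suc n) al be ga c d e (2*x'+x0) (2*y'+y0) \<longleftrightarrow>
    even (al+be+ga+c+d+e) \<and>
    cnd n (al div 2) (be div 2) (ga div 2) ((x0 + al mod 2 + c) div 2) ((y0 + be mod 2 + d) div 2)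
      (((x0+y0) mod 2 + ga mod 2 + e) div 2) x' y'"
proof -
  have q: "(xor (2*x'+x0) (2*y'+y0) + ga + e) div 2 = xor x' y' + ga div 2 + ((x0+y0) mod 2 + ga mod 2 + e) div 2"
    unfolding d2[of "xor (2*x'+x0) (2*y'+y0)" ga e] xx[OF assms] xm[OF assms] by simp
  have m: "(xor (2*x'+x0) (2*y'+y0) + ga + e) mod 2 = ((x0+y0) mod 2 + ga + e) mod 2"
    using xm[OF assms] by (metis mod_add_left_eq)
  show ?thesis unfolding cnd_def mod_Suc_iff xor_div2 d1 q m xor_mod2 par_lemma ..
qed

lemma G_Suc: "G (Suc n) al be ga c d e = (if even (al+be+ga+c+d+e) then
   (\<Sum>x0<2. \<Sum>y0<2. G n (al div 2) (be div 2) (ga div 2) ((x0 + al mod 2 + c) div 2)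
      ((y0 + be mod 2 + d) div 2) (((x0+y0) mod 2 + ga mod 2 + e) div 2)) else 0)"
proof -
  define I where "I x0 y0 x' y' = (if cnd n (al div 2) (be div 2) (ga div 2) ((x0 + al mod 2 + c) div 2)
      ((y0 + be mod 2 + d) div 2) (((x0+y0) mod 2 + ga mod 2 + e) div 2) x' y' then 1 else (0::nat))" for x0 y0 x' y'
  have "G (Suc n) al be ga c d e = (\<Sum>x'<2^n. \<Sum>x0<2. \<Sum>y'<2^n. \<Sum>y0<2.
      if cnd (Suc n) al be ga c d e (2*x'+x0) (2*y'+y0) then 1 else 0)"
    unfolding G_def power_Suc sum_double ..
  also have "\<dots> = (\<Sum>x'<2^n. \<Sum>x0<2. \<Sum>y'<2^n. \<Sum>y0<2.
      if even (al+be+ga+c+d+e) then I x0 y0 x' y' else 0)"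
    by (intro sum.cong refl) (simp add: cnd_step I_def)
  also have "\<dots> = (if even (al+be+ga+c+d+e) then (\<Sum>x'<2^n. \<Sum>x0<2. \<Sum>y'<2^n. \<Sum>y0<2. I x0 y0 x' y') else 0)"
    by simp
  also have "(\<Sum>x'<2^n. \<Sum>x0<2. \<Sum>y'<2^n. \<Sum>y0<2. I x0 y0 x' y') = (\<Sum>x0<2. \<Sum>y0<2. \<Sum>x'<2^n. \<Sum>y'<2^n. I x0 y0 x' y')"
  proof -
    have "(\<Sum>x'<2^n. \<Sum>x0<2. \<Sum>y'<2^n. \<Sum>y0<2. I x0 y0 x' y') = (\<Sum>x0<2. \<Sum>x'<2^n. \<Sum>y'<2^n. \<Sum>y0<2. I x0 y0 x' y')"
      by (rule sum.swap)
    also have "\<dots> = (\<Sum>x0<2. \<Sum>x'<2^n. \<Sum>y0<2. \<Sum>y'<2^n. I x0 y0 x' y')"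
      by (intro sum.cong refl sum.swap)
    also have "\<dots> = (\<Sum>x0<2. \<Sum>y0<2. \<Sum>x'<2^n. \<Sum>y'<2^n. I x0 y0 x' y')"
      by (intro sum.cong refl sum.swap)
    finally show ?thesis .
  qed
  finally show ?thesis by (simp add: G_def I_def)
qed
lemma two_set: "{..<2::nat} = {0,1}" by auto
lemma comb:
  fixes H :: "nat \<Rightarrow> nat"
  assumes "a0 \<le> 1" "b0 \<le> 1" "g0 \<le> 1" "c \<le> 1" "d \<le> 1" "e \<le> 1" "p \<le> 1"
  shows "(if even (a0+b0+g0+c+d+e) then (\<Sum>x0<2. \<Sum>y0<2.
      if even (p + (x0 + a0 + c) div 2 + (y0 + b0 + d) div 2 + ((x0+y0) mod 2 + g0 + e) div 2)
      then H ((x0 + a0 + c) div 2) else 0) else 0)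
   \<le> (\<Sum>x0<2. \<Sum>y0<2. if (x0 + a0 + c) div 2 = (y0 + a0 + c) div 2 then H ((x0 + a0 + c) div 2) else 0)"
proof -
  have e: "x \<le> 1 \<Longrightarrow> x = 0 \<or> x = (1::nat)" for x by auto
  show ?thesis unfolding two_set
    using e[OF assms(1)] e[OF assms(2)] e[OF assms(3)] e[OF assms(4)] e[OF assms(5)] e[OF assms(6)] e[OF assms(7)]
    by (elim disjE) simp_all
qed

lemma G_zero: "G 0 al be ga c d e = 1" by (simp add: G_def cnd_def)

lemma G_van: "n \<ge> 1 \<Longrightarrow> odd (al+be+ga+c+d+e) \<Longrightarrow> G n al be ga c d e = 0"
  by (cases n) (auto simp: G_Suc)

lemma par2: "even (al+be+ga+c+d+(e::nat)) \<longleftrightarrow> even (al mod 2 + be mod 2 + ga mod 2 + c + d + e)"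
  by simp

lemma par3: "even (al+be+ga+c+d+(e::nat)) \<longleftrightarrow> even ((al+be+ga) mod 2 + c + d + e)"
  by simp

lemma dle: "x0 < 2 \<Longrightarrow> a \<le> 1 \<Longrightarrow> c \<le> 1 \<Longrightarrow> (x0 + a + c) div 2 \<le> (1::nat)"
  by simp


lemma G_mono: "n \<ge> 1 \<Longrightarrow> c \<le> 1 \<Longrightarrow> d \<le> 1 \<Longrightarrow> e \<le> 1 \<Longrightarrow> G n al be ga c d e \<le> G n al al 0 c c 0"
proof (induction n arbitrary: al be ga c d e)
  case 0
  then show ?case by simp
next
  case (Suc m)
  show ?case
  proof (cases "m = 0")
    case True
    then show ?thesis by (simp add: G_Suc G_zero two_set)
  next
    case False
    then have m1: "m \<ge> 1" by simp
    define H where "H k = G m (al div 2) (al div 2) 0 k k 0" for k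
    define p where "p = (al div 2 + be div 2 + ga div 2) mod 2"
    have T: "G m (al div 2) (be div 2) (ga div 2) ((x0 + al mod 2 + c) div 2) ((y0 + be mod 2 + d) div 2)
        (((x0+y0) mod 2 + ga mod 2 + e) div 2) \<le>
       (if even (p + (x0 + al mod 2 + c) div 2 + (y0 + be mod 2 + d) div 2 + ((x0+y0) mod 2 + ga mod 2 + e) div 2)
        then H ((x0 + al mod 2 + c) div 2) else 0)" if "x0 < 2" "y0 < 2" for x0 y0
    proof (cases "even (al div 2 + be div 2 + ga div 2 + (x0 + al mod 2 + c) div 2 + (y0 + be mod 2 + d) div 2 + ((x0+y0) mod 2 + ga mod 2 + e) div 2)")
      case True
      have "even (p + (x0 + al mod 2 + c) div 2 + (y0 + be mod 2 + d) div 2 + ((x0+y0) mod 2 + ga mod 2 + e) div 2)"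
        using True unfolding p_def par3 .
      moreover have "G m (al div 2) (be div 2) (ga div 2) ((x0 + al mod 2 + c) div 2) ((y0 + be mod 2 + d) div 2)
        (((x0+y0) mod 2 + ga mod 2 + e) div 2) \<le> H ((x0 + al mod 2 + c) div 2)"
        unfolding H_def using Suc that m1 by (intro Suc.IH) (auto intro!: dle)
      ultimately show ?thesis by simp
    next
      case False
      then show ?thesis using G_van[OF m1] by simp
    qed
    have "G (Suc m) al be ga c d e \<le> (if even (al mod 2 + be mod 2 + ga mod 2 + c + d + e) then (\<Sum>x0<2. \<Sum>y0<2.
      if even (p + (x0 + al mod 2 + c) div 2 + (y0 + be mod 2 + d) div 2 + ((x0+y0) mod 2 + ga mod 2 + e) div 2)
      then H ((x0 + al mod 2 + c) div 2) else 0) else 0)"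
    proof (cases "even (al + be + ga + c + d + e)")
      case True
      have "(\<Sum>x0<2. \<Sum>y0<2. G m (al div 2) (be div 2) (ga div 2) ((x0 + al mod 2 + c) div 2) ((y0 + be mod 2 + d) div 2)
        (((x0+y0) mod 2 + ga mod 2 + e) div 2)) \<le> (\<Sum>x0<2. \<Sum>y0<2.
      if even (p + (x0 + al mod 2 + c) div 2 + (y0 + be mod 2 + d) div 2 + ((x0+y0) mod 2 + ga mod 2 + e) div 2)
      then H ((x0 + al mod 2 + c) div 2) else 0)"
        by (intro sum_mono T; simp)
      then show ?thesis using True unfolding G_Suc[of m] par2[symmetric] by simp
    next
      case False
      then show ?thesis unfolding G_Suc[of m] par2[symmetric] by simp
    qed
    also have "\<dots> \<le> (\<Sum>x0<2. \<Sum>y0<2. if (x0 + al mod 2 + c) div 2 = (y0 + al mod 2 + c) div 2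
         then H ((x0 + al mod 2 + c) div 2) else 0)"
      by (rule comb) (use Suc.prems in \<open>auto simp: p_def\<close>)
    also have "\<dots> = G (Suc m) al al 0 c c 0"
    proof -
      have R: "G m (al div 2) (al div 2) 0 ((x0 + al mod 2 + c) div 2) ((y0 + al mod 2 + c) div 2) 0 =
         (if (x0 + al mod 2 + c) div 2 = (y0 + al mod 2 + c) div 2 then H ((x0 + al mod 2 + c) div 2) else 0)"
        if "x0 < 2" "y0 < 2" for x0 y0
      proof (cases "(x0 + al mod 2 + c) div 2 = (y0 + al mod 2 + c) div 2")
        case True then show ?thesis by (simp add: H_def)
      next
        case False
        have "(x0 + al mod 2 + c) div 2 \<le> 1" "(y0 + al mod 2 + c) div 2 \<le> 1"
          using that Suc.prems by (auto intro!: dle)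
        then have "odd (al div 2 + al div 2 + 0 + (x0 + al mod 2 + c) div 2 + (y0 + al mod 2 + c) div 2 + 0)"
        proof -
          have "(x0 + al mod 2 + c) div 2 + (y0 + al mod 2 + c) div 2 = 1"
            using False \<open>(x0 + al mod 2 + c) div 2 \<le> 1\<close> \<open>(y0 + al mod 2 + c) div 2 \<le> 1\<close> by linarith
          then have eq: "al div 2 + al div 2 + 0 + (x0 + al mod 2 + c) div 2 + (y0 + al mod 2 + c) div 2 + 0 = Suc (2 * (al div 2))"
            by linarith
          show ?thesis by (subst eq) simp
        qed
        then show ?thesis using False G_van[OF m1] by simp
      qed
      have E: "G (Suc m) al al 0 c c 0 = (\<Sum>x0<2. \<Sum>y0<2. G m (al div 2) (al div 2) 0 ((x0 + al mod 2 + c) div 2) ((y0 + al mod 2 + c) div 2) 0)"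
        unfolding G_Suc[of m] by simp
      show ?thesis unfolding E by (intro sum.cong refl) (simp add: R)
    qed
    finally show ?thesis .
  qed
qed

lemma card_sum: "card {(x,y). x<N \<and> y<N \<and> P x y} = (\<Sum>x<N. \<Sum>y<(N::nat). if P x y then 1 else (0::nat))"
proof -
  have "{(x,y). x<N \<and> y<N \<and> P x y} = Sigma {..<N} (\<lambda>x. {y\<in>{..<N}. P x y})" by auto
  then have "card {(x,y). x<N \<and> y<N \<and> P x y} = (\<Sum>x<N. card {y\<in>{..<N}. P x y})"
    by (simp add: card_SigmaI)
  also have "\<dots> = (\<Sum>x<N. \<Sum>y<N. if P x y then 1 else 0)"
    unfolding card_eq_sum sum.inter_filter[OF finite_lessThan] ..
  finally show ?thesis .
qed

lemma adp_xor: "adp n (xorf n) al be ga = real (G n al be ga 0 0 0) / 4^n"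
  unfolding adp_def xorf_def addn_def card_sum G_def cnd_def by (simp add: xor_modp)

lemma swap4: "(\<Sum>x'<(A::nat). \<Sum>x0<(B::nat). \<Sum>y'<(C::nat). \<Sum>y0<(D::nat). f x0 y0 x' y') =
   (\<Sum>x0<B. \<Sum>y0<D. \<Sum>x'<A. \<Sum>y'<C. (f x0 y0 x' y' :: nat))"
proof -
  have "(\<Sum>x'<A. \<Sum>x0<B. \<Sum>y'<C. \<Sum>y0<D. f x0 y0 x' y') = (\<Sum>x0<B. \<Sum>x'<A. \<Sum>y'<C. \<Sum>y0<D. f x0 y0 x' y')"
    by (rule sum.swap)
  also have "\<dots> = (\<Sum>x0<B. \<Sum>x'<A. \<Sum>y0<D. \<Sum>y'<C. f x0 y0 x' y')"
    by (intro sum.cong refl sum.swap)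
  also have "\<dots> = (\<Sum>x0<B. \<Sum>y0<D. \<Sum>x'<A. \<Sum>y'<C. f x0 y0 x' y')"
    by (intro sum.cong refl sum.swap)
  finally show ?thesis .
qed

lemma rot_eq: "rotl (Suc m) m u = 2^m * (u mod 2) + u div 2"
proof -
  have "(u * 2^m) mod 2^Suc m = (u mod 2) * 2^m"
    using mod_mult_mult2[of u "2^m" 2] by (simp add: power_Suc mult.commute)
  then show ?thesis unfolding rotl_def by simp
qed

lemma rot_lt: "u < 2^Suc m \<Longrightarrow> rotl (Suc m) m u < 2^Suc m"
proof -
  assume "u < 2^Suc m"
  then have "u div 2 < 2^m" by (simp add: power_Suc less_mult_imp_div_less mult.commute)
  moreover have "u mod 2 \<le> 1" by simp
  ultimately have "2^m * (u mod 2) + u div 2 < 2^m * 1 + 2^m"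
    by (metis add_less_le_mono mult_le_mono2 add.commute)
  then show ?thesis unfolding rot_eq by simp
qed

lemma rot_mod: "u < 2^Suc m \<Longrightarrow> rotl (Suc m) m u mod 2^m = u div 2"
proof -
  assume "u < 2^Suc m"
  then have "u div 2 < 2^m" by (simp add: power_Suc less_mult_imp_div_less mult.commute)
  then show ?thesis unfolding rot_eq by simp
qed

lemma rot_div: "u < 2^Suc m \<Longrightarrow> rotl (Suc m) m u div 2^m = u mod 2"
proof -
  assume "u < 2^Suc m"
  then have "u div 2 < 2^m" by (simp add: power_Suc less_mult_imp_div_less mult.commute)
  then show ?thesis unfolding rot_eq by simp
qed

lemma rot_inj: "u < 2^Suc m \<Longrightarrow> v < 2^Suc m \<Longrightarrow> rotl (Suc m) m u = rotl (Suc m) m v \<Longrightarrow> u = v"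
  by (metis rot_mod rot_div div_mult_mod_eq)

lemma xor_lt: "(u::nat) < 2^n \<Longrightarrow> v < 2^n \<Longrightarrow> xor u v < 2^n"
  by (metis xor_modp mod_less pos2 zero_less_power mod_less_divisor)

lemma div_mod2: "((u::nat) mod (2 * K)) div 2 = (u div 2) mod K"
  using mod_mult2_eq[of u 2 K] by simp

lemma xr_imp:
  assumes "x < 2^Suc m" "y < 2^Suc m"
    and h: "rotl (Suc m) m (xor ((x+2*a) mod 2^Suc m) ((y+b) mod 2^Suc m)) = (rotl (Suc m) m (xor x y) + c) mod 2^Suc m"
  shows "cnd m a (b div 2) c 0 ((y mod 2 + b mod 2) div 2) 0 (x div 2) (y div 2)"
proof -
  define Z where "Z = xor ((x+2*a) mod 2^Suc m) ((y+b) mod 2^Suc m)"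
  have Zl: "Z < 2^Suc m" unfolding Z_def by (intro xor_lt) auto
  have zl: "xor x y < 2^Suc m" using assms by (intro xor_lt) auto
  have "Z div 2 = (rotl (Suc m) m (xor x y) + c) mod 2^Suc m mod 2^m"
    using h rot_mod[OF Zl] unfolding Z_def by simp
  also have "\<dots> = (rotl (Suc m) m (xor x y) + c) mod 2^m"
    by (simp add: mod_mod_cancel le_imp_power_dvd)
  also have "\<dots> = (xor x y div 2 + c) mod 2^m"
    using rot_mod[OF zl] by (metis mod_add_left_eq)
  finally have 1: "Z div 2 = (xor (x div 2) (y div 2) + c) mod 2^m" by (simp add: xor_div2)
  have "Z div 2 = xor (((x+2*a) div 2) mod 2^m) (((y+b) div 2) mod 2^m)"
    unfolding Z_def xor_div2 power_Suc div_mod2 ..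
  also have "\<dots> = xor (x div 2 + a) (y div 2 + b div 2 + (y mod 2 + b mod 2) div 2) mod 2^m"
    unfolding xor_modp using d2[of y b 0] by (simp add: add.commute)
  finally show ?thesis using 1 unfolding cnd_def by simp
qed

lemma G_double: "G (Suc m) (2*a) (2*a) 0 0 0 0 = 4 * G m a a 0 0 0 0"
  unfolding G_Suc by (simp add: two_set)

lemma xr_count:
  assumes m1: "m \<ge> 1"
  shows "card {(x,y). x<2^Suc m \<and> y<2^Suc m \<and> rotl (Suc m) m (xor ((x+2*a) mod 2^Suc m) ((y+b) mod 2^Suc m))
     = (rotl (Suc m) m (xor x y) + c) mod 2^Suc m} \<le> G (Suc m) (2*a) (2*a) 0 0 0 0"
proof -
  define J where "J x0 y0 x' y' = (if cnd m a (b div 2) c 0 ((y0 + b mod 2) div 2) 0 x' y' then 1 else (0::nat))" for x0 y0 x' y' :: nat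
  have "card {(x,y). x<2^Suc m \<and> y<2^Suc m \<and> rotl (Suc m) m (xor ((x+2*a) mod 2^Suc m) ((y+b) mod 2^Suc m))
     = (rotl (Suc m) m (xor x y) + c) mod 2^Suc m} = (\<Sum>x<2^Suc m. \<Sum>y<2^Suc m.
      if rotl (Suc m) m (xor ((x+2*a) mod 2^Suc m) ((y+b) mod 2^Suc m)) = (rotl (Suc m) m (xor x y) + c) mod 2^Suc m then 1 else 0)"
    by (rule card_sum)
  also have "\<dots> \<le> (\<Sum>x<2^Suc m. \<Sum>y<2^Suc m.
      if cnd m a (b div 2) c 0 ((y mod 2 + b mod 2) div 2) 0 (x div 2) (y div 2) then 1 else 0)"
  proof (intro sum_mono)
    fix x y :: nat assume "x \<in> {..<2^Suc m}" "y \<in> {..<2^Suc m}"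
    then show "(if rotl (Suc m) m (xor ((x+2*a) mod 2^Suc m) ((y+b) mod 2^Suc m)) = (rotl (Suc m) m (xor x y) + c) mod 2^Suc m then 1 else 0)
       \<le> (if cnd m a (b div 2) c 0 ((y mod 2 + b mod 2) div 2) 0 (x div 2) (y div 2) then 1 else (0::nat))"
      using xr_imp[of x m y a b c] by simp
  qed
  also have "\<dots> = (\<Sum>x'<2^m. \<Sum>x0<2. \<Sum>y'<2^m. \<Sum>y0<2. J x0 y0 x' y')"
    unfolding power_Suc sum_double J_def by (intro sum.cong refl) auto
  also have "\<dots> = (\<Sum>x0<2. \<Sum>y0<2. \<Sum>x'<2^m. \<Sum>y'<2^m. J x0 y0 x' y')"
    by (rule swap4)
  also have "\<dots> = (\<Sum>x0<2::nat. \<Sum>y0<2::nat. G m a (b div 2) c 0 ((y0 + b mod 2) div 2) 0)"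
    unfolding G_def J_def ..
  also have "\<dots> \<le> (\<Sum>x0<2::nat. \<Sum>y0<2::nat. G m a a 0 0 0 0)"
    by (intro sum_mono G_mono m1) auto
  also have "\<dots> = G (Suc m) (2*a) (2*a) 0 0 0 0"
    unfolding G_double by simp
  finally show ?thesis .
qed

theorem corollary4:
  fixes n a :: nat
  assumes "n \<ge> 2" and "a < 2 ^ (n - 1)"
  shows "Max {adp n (xrf n (n - 1)) (2 * a) b c | b c. b < 2 ^ n \<and> c < 2 ^ n}
           = adp n (xorf n) (2 * a) (2 * a) 0
       \<and> adp n (xorf n) (2 * a) (2 * a) 0
           = Max {adp n (xorf n) (2 * a) b c | b c. b < 2 ^ n \<and> c < 2 ^ n}"
proof -
  obtain m where n: "n = Suc m" and m1: "m \<ge> 1" using assms(1) by (cases n) auto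
  have a2: "2 * a < 2 ^ n" using assms(2) n by simp
  define V where "V = adp n (xorf n) (2 * a) (2 * a) 0"
  have V: "V = real (G n (2*a) (2*a) 0 0 0 0) / 4^n" unfolding V_def adp_xor ..
  have S1: "{adp n (xrf n (n - 1)) (2 * a) b c | b c. b < 2 ^ n \<and> c < 2 ^ n}
     = (\<lambda>(b,c). adp n (xrf n (n - 1)) (2 * a) b c) ` ({..<2^n} \<times> {..<2^n})" by auto
  have S2: "{adp n (xorf n) (2 * a) b c | b c. b < 2 ^ n \<and> c < 2 ^ n}
     = (\<lambda>(b,c). adp n (xorf n) (2 * a) b c) ` ({..<2^n} \<times> {..<2^n})" by auto
  have xr_le: "adp n (xrf n (n - 1)) (2 * a) b c \<le> V" for b c
  proof -
    have "adp n (xrf n (n - 1)) (2 * a) b c = real (card {(x,y). x<2^Suc m \<and> y<2^Suc m \<and> rotl (Suc m) m (xor ((x+2*a) mod 2^Suc m) ((y+b) mod 2^Suc m))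
     = (rotl (Suc m) m (xor x y) + c) mod 2^Suc m}) / 4^n"
      unfolding adp_def xrf_def addn_def n by simp
    also have "\<dots> \<le> V" unfolding V n
      by (intro divide_right_mono of_nat_mono xr_count m1) simp
    finally show ?thesis .
  qed
  have xo_le: "adp n (xorf n) (2 * a) b c \<le> V" for b c
    unfolding V adp_xor using G_mono[of n 0 0 0 "2*a" b c] n
    by (intro divide_right_mono of_nat_mono) auto
  have xr_eq: "adp n (xrf n (n - 1)) (2 * a) (2 * a) 0 = V"
  proof -
    have "(rotl (Suc m) m (xor ((x+2*a) mod 2^Suc m) ((y+2*a) mod 2^Suc m)) = (rotl (Suc m) m (xor x y) + 0) mod 2^Suc m)
       \<longleftrightarrow> (xor ((x+2*a) mod 2^Suc m) ((y+2*a) mod 2^Suc m) = (xor x y + 0) mod 2^Suc m)"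
      if "x < 2^Suc m" "y < 2^Suc m" for x y
    proof -
      have l1: "xor ((x+2*a) mod 2^Suc m) ((y+2*a) mod 2^Suc m) < 2^Suc m" by (intro xor_lt) auto
      have l2: "xor x y < 2^Suc m" using that by (intro xor_lt) auto
      show ?thesis using rot_inj[OF l1 l2] rot_lt[OF l2] l2 by auto
    qed
    then have "{(x,y). x<2^Suc m \<and> y<2^Suc m \<and> rotl (Suc m) m (xor ((x+2*a) mod 2^Suc m) ((y+2*a) mod 2^Suc m)) = (rotl (Suc m) m (xor x y) + 0) mod 2^Suc m}
      = {(x,y). x<2^Suc m \<and> y<2^Suc m \<and> xor ((x+2*a) mod 2^Suc m) ((y+2*a) mod 2^Suc m) = (xor x y + 0) mod 2^Suc m}"
      by auto
    then show ?thesis unfolding V_def adp_def xrf_def xorf_def addn_def n by simp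
  qed
  have 1: "Max {adp n (xrf n (n - 1)) (2 * a) b c | b c. b < 2 ^ n \<and> c < 2 ^ n} = V"
    unfolding S1
  proof (rule Max_eqI)
    show "finite ((\<lambda>(b,c). adp n (xrf n (n - 1)) (2 * a) b c) ` ({..<2^n} \<times> {..<2^n}))" by simp
    show "y \<le> V" if "y \<in> (\<lambda>(b,c). adp n (xrf n (n - 1)) (2 * a) b c) ` ({..<2^n} \<times> {..<2^n})" for y
      using that xr_le by auto
    show "V \<in> (\<lambda>(b,c). adp n (xrf n (n - 1)) (2 * a) b c) ` ({..<2^n} \<times> {..<2^n})"
      using xr_eq a2 by (auto intro!: image_eqI[where x="(2*a, 0)"])
  qed
  have 2: "Max {adp n (xorf n) (2 * a) b c | b c. b < 2 ^ n \<and> c < 2 ^ n} = V"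
    unfolding S2
  proof (rule Max_eqI)
    show "finite ((\<lambda>(b,c). adp n (xorf n) (2 * a) b c) ` ({..<2^n} \<times> {..<2^n}))" by simp
    show "y \<le> V" if "y \<in> (\<lambda>(b,c). adp n (xorf n) (2 * a) b c) ` ({..<2^n} \<times> {..<2^n})" for y
      using that xo_le by auto
    show "V \<in> (\<lambda>(b,c). adp n (xorf n) (2 * a) b c) ` ({..<2^n} \<times> {..<2^n})"
      using a2 unfolding V_def by (auto intro!: image_eqI[where x="(2*a, 0)"])
  qed
  show ?thesis using 1 2 unfolding V_def by simp
qed
end
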